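(* For every $n\ge 9$, the graph $G_n$ is not an IP-SEG graph.
   Context: Let $L_1$ and $L_2$ be two distinct parallel horizontal lines in the plane. A closed straight line segment is an interval segment if both of its endpoints lie on the same line $L_i$, and a permutation segment if one endpoint lies on $L_1$ and the other on $L_2$. An IP-SEG model is a finite family of interval and permutation segments; its intersection graph has one vertex per segment, adjacent iff the segments intersect. A graph is an IP-SEG graph if it is isomorphic to the intersection graph of an IP-SEG model. For $n\ge 3$, $G_n$ is the graph on $3n$ vertices $v_1,\dots,v_n,w_1,\dots,w_n,z_1,\dots,z_n$ whose edges are $v_iv_{i+1}$ (indices mod $n$), $v_iw_i$ and $w_iz_i$ for $1\le i\le n$, and no others. *)

theory Defs
  imports "HOL-Analysis.Analysis"
begin

type_synonym pt = "real \<times> real"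
type_synonym seg = "pt \<times> pt"

text \<open>The two lines are L1 = {y = c1} and L2 = {y = c2}, with c1 distinct from c2.
  A segment is given by its two endpoints; its point set is the closed segment between them.\<close>

definition seg_set :: "seg \<Rightarrow> pt set" where
  "seg_set s = closed_segment (fst s) (snd s)"

definition interval_seg :: "real \<Rightarrow> real \<Rightarrow> seg \<Rightarrow> bool" where
  "interval_seg c1 c2 s \<longleftrightarrow> fst s \<noteq> snd s \<and>
     ((snd (fst s) = c1 \<and> snd (snd s) = c1) \<or> (snd (fst s) = c2 \<and> snd (snd s) = c2))"

definition perm_seg :: "real \<Rightarrow> real \<Rightarrow> seg \<Rightarrow> bool" where
  "perm_seg c1 c2 s \<longleftrightarrow>
     ((snd (fst s) = c1 \<and> snd (snd s) = c2) \<or> (snd (fst s) = c2 \<and> snd (snd s) = c1))"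

definition IP_SEG_graph :: "real \<Rightarrow> real \<Rightarrow> 'v set \<Rightarrow> ('v \<Rightarrow> 'v \<Rightarrow> bool) \<Rightarrow> bool" where
  "IP_SEG_graph c1 c2 V E \<longleftrightarrow>
     (\<exists>s :: 'v \<Rightarrow> seg.
        (\<forall>v\<in>V. interval_seg c1 c2 (s v) \<or> perm_seg c1 c2 (s v)) \<and>
        (\<forall>u\<in>V. \<forall>v\<in>V. u \<noteq> v \<longrightarrow> (E u v \<longleftrightarrow> seg_set (s u) \<inter> seg_set (s v) \<noteq> {})))"

datatype gvert = Vv nat | Wv nat | Zv nat

text \<open>G_n with indices 0..n-1 (v_i = Vv i, w_i = Wv i, z_i = Zv i).\<close>

definition Gn_verts :: "nat \<Rightarrow> gvert set" where
  "Gn_verts n = Vv ` {..<n} \<union> Wv ` {..<n} \<union> Zv ` {..<n}"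

definition Gn_adj :: "nat \<Rightarrow> gvert \<Rightarrow> gvert \<Rightarrow> bool" where
  "Gn_adj n x y \<longleftrightarrow> (\<exists>i<n.
      {x, y} = {Vv i, Vv ((i + 1) mod n)} \<or> {x, y} = {Vv i, Wv i} \<or> {x, y} = {Wv i, Zv i})"

end

theory Submission
  imports Defs
begin


lemma in_seg: fixes a b m :: pt shows "m \<in> closed_segment a b \<longleftrightarrow> (\<exists>u. 0 \<le> u \<and> u \<le> 1 \<and>
   fst m = (1-u)* fst a + u* fst b \<and> snd m = (1-u)* snd a + u* snd b)"
proof -
  have e: "(1-u) *\<^sub>R a + u *\<^sub>R b = ((1-u)* fst a + u* fst b, (1-u)* snd a + u* snd b)" for u :: real
    by (simp add: prod_eq_iff)
  show ?thesis unfolding closed_segment_def e mem_Collect_eq prod_eq_iff by auto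
qed

definition online :: "real \<Rightarrow> seg \<Rightarrow> bool" where
  "online c \<sigma> \<longleftrightarrow> snd (fst \<sigma>) = c \<and> snd (snd \<sigma>) = c"

lemma online_pt: "online c \<sigma> \<Longrightarrow> m \<in> seg_set \<sigma> \<Longrightarrow> snd m = c"
  unfolding online_def seg_set_def in_seg by (auto simp: algebra_simps)

lemma conv_bounds: "0 \<le> (u::real) \<Longrightarrow> u \<le> 1 \<Longrightarrow> min a b \<le> (1-u)*a + u*b \<and> (1-u)*a + u*b \<le> max a b"
proof -
  assume u: "0 \<le> u" "u \<le> 1"
  have "(1-u)*min a b + u * min a b \<le> (1-u)*a + u*b"
    using u by (intro add_mono mult_left_mono) auto
  moreover have "(1-u)*a + u*b \<le> (1-u)*max a b + u * max a b"
    using u by (intro add_mono mult_left_mono) auto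
  ultimately show ?thesis by (simp add: algebra_simps)
qed

lemma strip: "interval_seg c1 c2 \<sigma> \<or> perm_seg c1 c2 \<sigma> \<Longrightarrow> m \<in> seg_set \<sigma> \<Longrightarrow>
   min c1 c2 \<le> snd m \<and> snd m \<le> max c1 c2"
proof -
  assume v: "interval_seg c1 c2 \<sigma> \<or> perm_seg c1 c2 \<sigma>" and m: "m \<in> seg_set \<sigma>"
  then obtain u where u: "0 \<le> u" "u \<le> 1" and y: "snd m = (1-u)* snd (fst \<sigma>) + u* snd (snd \<sigma>)"
    unfolding seg_set_def in_seg by blast
  have e: "snd (fst \<sigma>) \<in> {c1,c2}" "snd (snd \<sigma>) \<in> {c1,c2}" using v
    unfolding interval_seg_def perm_seg_def by auto
  have "min (snd (fst \<sigma>)) (snd (snd \<sigma>)) \<le> snd m \<and> snd m \<le> max (snd (fst \<sigma>)) (snd (snd \<sigma>))"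
    using conv_bounds[OF u] y by simp
  then show ?thesis using e by auto
qed

definition pa :: "real \<Rightarrow> seg \<Rightarrow> real" where
  "pa c1 \<sigma> = (if snd (fst \<sigma>) = c1 then fst (fst \<sigma>) else fst (snd \<sigma>))"
definition pb :: "real \<Rightarrow> seg \<Rightarrow> real" where
  "pb c1 \<sigma> = (if snd (fst \<sigma>) = c1 then fst (snd \<sigma>) else fst (fst \<sigma>))"

lemma perm_pts: "perm_seg c1 c2 \<sigma> \<Longrightarrow> c1 \<noteq> c2 \<Longrightarrow>
  seg_set \<sigma> = closed_segment (pa c1 \<sigma>, c1) (pb c1 \<sigma>, c2)"
  unfolding perm_seg_def seg_set_def pa_def pb_def
  by (cases \<sigma>) (auto simp: closed_segment_commute prod_eq_iff)

definition K :: "real \<Rightarrow> real \<Rightarrow> seg \<Rightarrow> real" where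
  "K c1 c2 \<sigma> = (pb c1 \<sigma> - pa c1 \<sigma>) / (c2 - c1)"

definition hP :: "real \<Rightarrow> real \<Rightarrow> seg \<Rightarrow> pt \<Rightarrow> real" where
  "hP c1 c2 \<sigma> m = fst m - pa c1 \<sigma> - (snd m - c1) * K c1 c2 \<sigma>"

lemma hP_zero: assumes "perm_seg c1 c2 \<sigma>" "c1 \<noteq> c2" "min c1 c2 \<le> snd m" "snd m \<le> max c1 c2"
  "hP c1 c2 \<sigma> m = 0" shows "m \<in> seg_set \<sigma>"
proof -
  define u where "u = (snd m - c1) / (c2 - c1)"
  have u: "0 \<le> u \<and> u \<le> 1"
  proof (cases "c1 < c2")
    case True then show ?thesis using assms(3,4) by (auto simp: u_def field_simps)
  next
    case False then have "c2 < c1" using assms(2) by auto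
    then show ?thesis using assms(3,4) by (auto simp: u_def field_simps)
  qed
  have k: "u*(c2-c1) = snd m - c1" using assms(2) by (simp add: u_def)
  have k2: "(1-u)*c1 = c1 - u*c1" "u*(c2-c1) = u*c2 - u*c1" by (simp_all add: algebra_simps)
  have y: "snd m = (1-u)*c1 + u*c2" using k k2 by linarith
  have k3: "(snd m - c1) * K c1 c2 \<sigma> = u*(pb c1 \<sigma> - pa c1 \<sigma>)"
    by (simp add: u_def K_def)
  have k4: "(1-u)*pa c1 \<sigma> = pa c1 \<sigma> - u*pa c1 \<sigma>" "u*(pb c1 \<sigma> - pa c1 \<sigma>) = u*pb c1 \<sigma> - u*pa c1 \<sigma>"
    by (simp_all add: algebra_simps)
  have x: "fst m = (1-u)*pa c1 \<sigma> + u*pb c1 \<sigma>" using assms(5) k3 k4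
    unfolding hP_def by linarith
  show ?thesis unfolding perm_pts[OF assms(1,2)] in_seg using u x y by auto
qed

lemma hP_lin0: "hP c1 c2 \<sigma> ((1-u)* fst a + u* fst b, (1-u)* snd a + u* snd b) = (1-u) * hP c1 c2 \<sigma> a + u * hP c1 c2 \<sigma> b"
  unfolding hP_def by (simp add: algebra_simps)

lemma hP_lin: "fst m = (1-u)* fst a + u* fst b \<Longrightarrow> snd m = (1-u)* snd a + u* snd b \<Longrightarrow>
    hP c1 c2 \<sigma> m = (1-u) * hP c1 c2 \<sigma> a + u * hP c1 c2 \<sigma> b"
  using hP_lin0[of c1 c2 \<sigma> u a b] by (metis prod.collapse)

lemma hP_comb: "m \<in> closed_segment a b \<Longrightarrow> \<exists>u. 0 \<le> u \<and> u \<le> 1 \<and>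
    hP c1 c2 \<sigma> m = (1-u) * hP c1 c2 \<sigma> a + u * hP c1 c2 \<sigma> b"
  unfolding in_seg using hP_lin by blast

lemma hP_sign:
  assumes x: "perm_seg c1 c2 x" and c: "c1 \<noteq> c2"
    and y: "interval_seg c1 c2 y \<or> perm_seg c1 c2 y"
    and d: "seg_set x \<inter> seg_set y = {}"
  shows "(\<forall>m\<in>seg_set y. 0 < hP c1 c2 x m) \<or> (\<forall>m\<in>seg_set y. hP c1 c2 x m < 0)"
proof -
  let ?h = "hP c1 c2 x"
  have nz: "?h m \<noteq> 0" if "m \<in> seg_set y" for m
    using hP_zero[OF x c] strip[OF y that] d that by blast
  define h1 where "h1 = ?h (fst y)"
  define h2 where "h2 = ?h (snd y)"
  have e1: "fst y \<in> seg_set y" "snd y \<in> seg_set y" unfolding seg_set_def by auto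
  have "h1 \<noteq> 0" "h2 \<noteq> 0" using nz e1 by (auto simp: h1_def h2_def)
  have same: "(0 < h1 \<and> 0 < h2) \<or> (h1 < 0 \<and> h2 < 0)"
  proof (rule ccontr)
    assume ns: "\<not> ?thesis"
    define u where "u = h1 / (h1 - h2)"
    have hh: "h1 - h2 \<noteq> 0" using ns \<open>h1 \<noteq> 0\<close> \<open>h2 \<noteq> 0\<close> by auto
    have u: "0 \<le> u \<and> u \<le> 1"
    proof (cases "0 < h1")
      case True
      then have "h2 < 0" using ns \<open>h2 \<noteq> 0\<close> by auto
      then show ?thesis using True unfolding u_def by (simp add: divide_le_eq_1)
    next
      case False
      then have "h1 < 0" "0 < h2" using ns \<open>h1 \<noteq> 0\<close> \<open>h2 \<noteq> 0\<close> by auto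
      then show ?thesis unfolding u_def by (simp add: divide_le_eq_1 zero_le_divide_iff)
    qed
    define m where "m = ((1-u)* fst (fst y) + u* fst (snd y), (1-u)* snd (fst y) + u* snd (snd y))"
    have mi: "m \<in> seg_set y" unfolding seg_set_def in_seg m_def using u by auto
    have "?h m = (1-u)*h1 + u*h2" unfolding h1_def h2_def
      by (rule hP_lin) (simp_all add: m_def)
    also have "\<dots> = 0"
    proof -
      have "u*(h1-h2) = h1" using hh by (simp add: u_def)
      moreover have "(1-u)*h1 + u*h2 = h1 - u*(h1-h2)" by (simp add: algebra_simps)
      ultimately show ?thesis by simp
    qed
    finally show False using nz[OF mi] by simp
  qed
  have comb: "\<exists>u. 0 \<le> u \<and> u \<le> 1 \<and> ?h m = (1-u)*h1 + u*h2" if "m \<in> seg_set y" for m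
    using hP_comb[of m "fst y" "snd y"] that unfolding seg_set_def h1_def h2_def by auto
  show ?thesis
  proof (cases "0 < h1")
    case True
    then have "0 < h2" using same by auto
    have "0 < ?h m" if mm: "m \<in> seg_set y" for m
    proof -
      obtain u where u: "0 \<le> u" "u \<le> 1" "?h m = (1-u)*h1 + u*h2" using comb[OF mm] by blast
      have "0 \<le> (1-u)*h1" "0 \<le> u*h2" using u True \<open>0<h2\<close> by auto
      then have "0 \<le> ?h m" using u by simp
      then show ?thesis using nz[OF mm] by simp
    qed
    then show ?thesis by blast
  next
    case False
    then have "h1 < 0" "h2 < 0" using same by auto
    have "?h m < 0" if mm: "m \<in> seg_set y" for m
    proof -
      obtain u where u: "0 \<le> u" "u \<le> 1" "?h m = (1-u)*h1 + u*h2" using comb[OF mm] by blast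
      have "(1-u)*h1 \<le> 0" "u*h2 \<le> 0" using u \<open>h1<0\<close> \<open>h2<0\<close>
        by (auto simp: mult_nonneg_nonpos)
      then have "?h m \<le> 0" using u by simp
      then show ?thesis using nz[OF mm] by simp
    qed
    then show ?thesis by blast
  qed
qed

definition side :: "real \<Rightarrow> real \<Rightarrow> seg \<Rightarrow> seg \<Rightarrow> bool" where
  "side c1 c2 x y \<longleftrightarrow> 0 < hP c1 c2 x (fst y)"

lemma side_const:
  assumes "perm_seg c1 c2 x" "c1 \<noteq> c2" "interval_seg c1 c2 y \<or> perm_seg c1 c2 y"
    "seg_set x \<inter> seg_set y = {}" "m \<in> seg_set y"
  shows "0 < hP c1 c2 x m \<longleftrightarrow> side c1 c2 x y"
proof -
  have "fst y \<in> seg_set y" unfolding seg_set_def by auto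
  then show ?thesis using hP_sign[OF assms(1-4)] assms(5) unfolding side_def by force
qed

lemma side_edge:
  assumes "perm_seg c1 c2 x" "c1 \<noteq> c2" "interval_seg c1 c2 y \<or> perm_seg c1 c2 y"
    "interval_seg c1 c2 z \<or> perm_seg c1 c2 z"
    "seg_set x \<inter> seg_set y = {}" "seg_set x \<inter> seg_set z = {}"
    "seg_set y \<inter> seg_set z \<noteq> {}"
  shows "side c1 c2 x y = side c1 c2 x z"
proof -
  obtain m where "m \<in> seg_set y" "m \<in> seg_set z" using assms(7) by blast
  then show ?thesis using side_const[OF assms(1,2,3,5)] side_const[OF assms(1,2,4,6)] by blast
qed

lemma side_antisym:
  assumes x: "perm_seg c1 c2 x" and y: "perm_seg c1 c2 y" and c: "c1 \<noteq> c2"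
    and d: "seg_set x \<inter> seg_set y = {}"
  shows "side c1 c2 x y \<longleftrightarrow> \<not> side c1 c2 y x"
proof -
  have px: "(pa c1 x, c1) \<in> seg_set x" using perm_pts[OF x c] by auto
  have py: "(pa c1 y, c1) \<in> seg_set y" using perm_pts[OF y c] by auto
  have ne: "pa c1 x \<noteq> pa c1 y" using px py d by auto
  have 1: "side c1 c2 x y \<longleftrightarrow> 0 < pa c1 y - pa c1 x"
    using side_const[OF x c _ d py] y by (simp add: hP_def)
  have d': "seg_set y \<inter> seg_set x = {}" using d by blast
  have 2: "side c1 c2 y x \<longleftrightarrow> 0 < pa c1 x - pa c1 y"
    using side_const[OF y c _ d' px] x by (simp add: hP_def)
  show ?thesis using 1 2 ne by linarith
qed

definition Tr :: "real \<Rightarrow> seg \<Rightarrow> real set" where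
  "Tr c \<sigma> = {X. (X,c) \<in> seg_set \<sigma>}"

definition ivl :: "real set \<Rightarrow> bool" where
  "ivl S \<longleftrightarrow> (\<forall>x\<in>S. \<forall>y\<in>S. \<forall>z. x \<le> z \<and> z \<le> y \<longrightarrow> z \<in> S)"

lemma ivl_Tr: "ivl (Tr c \<sigma>)"
  unfolding ivl_def Tr_def
proof (intro ballI allI impI, simp)
  fix x y z assume a: "(x,c) \<in> seg_set \<sigma>" "(y,c) \<in> seg_set \<sigma>" "x \<le> z \<and> z \<le> y"
  have sub: "closed_segment (x,c) (y,c) \<subseteq> seg_set \<sigma>"
    using a by (intro closed_segment_subset) (auto simp: seg_set_def convex_closed_segment)
  have "(z,c) \<in> closed_segment (x,c) (y,c)"
  proof (cases "x < y")
    case True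
    define u where "u = (z-x)/(y-x)"
    have k: "u*(y-x) = z - x" using True by (simp add: u_def)
    have u: "0 \<le> u" "u \<le> 1" using True a(3) by (auto simp: u_def field_simps)
    have "z = (1-u)*x + u*y" using k by (simp add: algebra_simps)
    moreover have "c = (1-u)*c + u*c" by (simp add: algebra_simps)
    ultimately show ?thesis unfolding in_seg using u by auto
  next
    case False then have "z = x" using a(3) by auto
    then show ?thesis by auto
  qed
  then show "(z,c) \<in> seg_set \<sigma>" using sub by auto
qed

lemma ivlD: "ivl S \<Longrightarrow> x \<in> S \<Longrightarrow> y \<in> S \<Longrightarrow> x \<le> z \<Longrightarrow> z \<le> y \<Longrightarrow> z \<in> S"
  unfolding ivl_def by blast

lemma ivl_Un: "ivl S \<Longrightarrow> ivl T \<Longrightarrow> S \<inter> T \<noteq> {} \<Longrightarrow> ivl (S \<union> T)"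
proof -
  assume S: "ivl S" and T: "ivl T" and ST: "S \<inter> T \<noteq> {}"
  obtain w where w: "w \<in> S" "w \<in> T" using ST by blast
  show ?thesis unfolding ivl_def
  proof (intro ballI allI impI)
    fix x y z assume x: "x \<in> S \<union> T" and y: "y \<in> S \<union> T" and z: "x \<le> z \<and> z \<le> y"
    show "z \<in> S \<union> T"
    proof (cases "z \<le> w")
      case True
      show ?thesis
      proof (cases "x \<in> S")
        case True then show ?thesis using ivlD[OF S True w(1)] z \<open>z \<le> w\<close> by blast
      next
        case False then have "x \<in> T" using x by blast
        then show ?thesis using ivlD[OF T _ w(2)] z \<open>z \<le> w\<close> by blast
      qed
    next
      case False
      then have zw: "w \<le> z" by simp
      show ?thesis
      proof (cases "y \<in> S")
        case True then show ?thesis using ivlD[OF S w(1) True] z zw by blast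
      next
        case False then have "y \<in> T" using y by blast
        then show ?thesis using ivlD[OF T w(2)] z zw by blast
      qed
    qed
  qed
qed

lemma asteroid:
  assumes iv: "ivl A" "ivl B" "ivl C" "ivl D" "ivl E" "ivl W" "ivl Z"
    and ne: "A \<noteq> {}" "E \<noteq> {}" "Z \<noteq> {}"
    and ed: "A \<inter> B \<noteq> {}" "B \<inter> C \<noteq> {}" "C \<inter> D \<noteq> {}" "D \<inter> E \<noteq> {}"
      "C \<inter> W \<noteq> {}" "W \<inter> Z \<noteq> {}"
    and dz: "Z \<inter> A = {}" "Z \<inter> B = {}" "Z \<inter> C = {}" "Z \<inter> D = {}" "Z \<inter> E = {}"
    and da: "A \<inter> C = {}" "A \<inter> D = {}" "A \<inter> E = {}" "A \<inter> W = {}"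
    and de: "E \<inter> B = {}" "E \<inter> C = {}" "E \<inter> W = {}"
  shows False
proof -
  obtain a e z where a: "a \<in> A" and e: "e \<in> E" and z: "z \<in> Z" using ne by blast
  have u1: "ivl (A \<union> B \<union> C \<union> D \<union> E)"
    by (rule ivl_Un ivl_Un ivl_Un ivl_Un iv | use ed in blast)+
  have u2: "ivl (E \<union> D \<union> C \<union> W \<union> Z)"
    by (rule ivl_Un ivl_Un ivl_Un ivl_Un iv | use ed in blast)+
  have u3: "ivl (A \<union> B \<union> C \<union> W \<union> Z)"
    by (rule ivl_Un ivl_Un ivl_Un ivl_Un iv | use ed in blast)+
  consider "min a e \<le> z \<and> z \<le> max a e" | "min e z \<le> a \<and> a \<le> max e z" | "min a z \<le> e \<and> e \<le> max a z"
    unfolding min_def max_def by argo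
  then show False
  proof cases
    case 1
    let ?U = "A \<union> B \<union> C \<union> D \<union> E"
    have mm: "min a e \<in> ?U" "max a e \<in> ?U" using a e unfolding min_def max_def by (simp_all split: if_split)
    have "z \<in> ?U" using ivlD[OF u1 mm(1) mm(2)] 1 by blast
    then show False using z dz by auto
  next
    case 2
    let ?U = "E \<union> D \<union> C \<union> W \<union> Z"
    have mm: "min e z \<in> ?U" "max e z \<in> ?U" using z e unfolding min_def max_def by (simp_all split: if_split)
    have "a \<in> ?U" using ivlD[OF u2 mm(1) mm(2)] 2 by blast
    then show False using a da dz by auto
  next
    case 3
    let ?U = "A \<union> B \<union> C \<union> W \<union> Z"
    have mm: "min a z \<in> ?U" "max a z \<in> ?U" using a z unfolding min_def max_def by (simp_all split: if_split)
    have "e \<in> ?U" using ivlD[OF u3 mm(1) mm(2)] 3 by blast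
    then show False using e de dz da by auto
  qed
qed



lemma adj_simps:
  "Gn_adj n (Vv a) (Vv b) \<longleftrightarrow> (\<exists>i<n. (a = i \<and> b = (i+1) mod n) \<or> (b = i \<and> a = (i+1) mod n))"
  "Gn_adj n (Vv a) (Wv b) \<longleftrightarrow> a = b \<and> a < n"
  "Gn_adj n (Wv a) (Vv b) \<longleftrightarrow> a = b \<and> a < n"
  "Gn_adj n (Wv a) (Zv b) \<longleftrightarrow> a = b \<and> a < n"
  "Gn_adj n (Zv a) (Wv b) \<longleftrightarrow> a = b \<and> a < n"
  "\<not> Gn_adj n (Vv a) (Zv b)" "\<not> Gn_adj n (Zv a) (Vv b)"
  "\<not> Gn_adj n (Wv a) (Wv b)" "\<not> Gn_adj n (Zv a) (Zv b)"
  unfolding Gn_adj_def by (auto simp: doubleton_eq_iff)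

lemma modsum: fixes i t n :: nat assumes "i < n" "t < n" shows "(i+t) mod n = (if i+t < n then i+t else i+t-n)"
proof (cases "i+t < n")
  case True then show ?thesis using mod_less[OF True] by simp
next
  case False
  then have "(i+t) mod n = (i+t-n) mod n" by (simp add: le_mod_geq)
  also have "\<dots> = i+t-n" using assms False by simp
  finally show ?thesis using False by simp
qed

lemma suc_mod: "(i::nat) < n \<Longrightarrow> Suc i mod n = (if Suc i = n then 0 else Suc i)"
  using modsum[of i n 1] by (cases "n = 1") auto

lemma VV_iff: assumes "a < n" "b < n"
  shows "Gn_adj n (Vv a) (Vv b) \<longleftrightarrow> (b = a+1 \<or> a = b+1 \<or> (a+1 = n \<and> b = 0) \<or> (b+1 = n \<and> a = 0))"
  unfolding adj_simps using assms by (auto simp: suc_mod split: if_splits)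

lemma verts: "Vv i \<in> Gn_verts n \<longleftrightarrow> i < n" "Wv i \<in> Gn_verts n \<longleftrightarrow> i < n" "Zv i \<in> Gn_verts n \<longleftrightarrow> i < n"
  unfolding Gn_verts_def by auto

definition grp :: "nat \<Rightarrow> gvert set" where "grp i = {Vv i, Wv i, Zv i}"

lemma online_cases: "interval_seg c1 c2 \<sigma> \<Longrightarrow> online c1 \<sigma> \<or> online c2 \<sigma>"
  unfolding interval_seg_def online_def by auto

lemma online_prop: "c1 \<noteq> c2 \<Longrightarrow> online c \<sigma> \<Longrightarrow> interval_seg c1 c2 \<tau> \<Longrightarrow>
   seg_set \<sigma> \<inter> seg_set \<tau> \<noteq> {} \<Longrightarrow> online c \<tau>"
proof -
  assume c: "c1 \<noteq> c2" and o: "online c \<sigma>" and t: "interval_seg c1 c2 \<tau>" and i: "seg_set \<sigma> \<inter> seg_set \<tau> \<noteq> {}"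
  obtain m where m: "m \<in> seg_set \<sigma>" "m \<in> seg_set \<tau>" using i by blast
  obtain c' where o': "online c' \<tau>" using online_cases[OF t] by blast
  have "snd m = c" "snd m = c'" using online_pt[OF o m(1)] online_pt[OF o' m(2)] by auto
  then show ?thesis using o' by simp
qed

lemma online_Tr: "online c \<sigma> \<Longrightarrow> Tr c \<sigma> \<noteq> {}"
proof -
  assume o: "online c \<sigma>"
  have "fst \<sigma> \<in> seg_set \<sigma>" unfolding seg_set_def by auto
  moreover have "fst \<sigma> = (fst (fst \<sigma>), c)" using o unfolding online_def by (simp add: prod_eq_iff)
  ultimately show ?thesis unfolding Tr_def by (metis empty_iff mem_Collect_eq)
qed

lemma perm_Tr: "perm_seg c1 c2 \<sigma> \<Longrightarrow> c1 \<noteq> c2 \<Longrightarrow> c = c1 \<or> c = c2 \<Longrightarrow> Tr c \<sigma> \<noteq> {}"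
proof -
  assume p: "perm_seg c1 c2 \<sigma>" and c: "c1 \<noteq> c2" and cc: "c = c1 \<or> c = c2"
  have "(pa c1 \<sigma>, c1) \<in> seg_set \<sigma>" "(pb c1 \<sigma>, c2) \<in> seg_set \<sigma>"
    using perm_pts[OF p c] by auto
  then show ?thesis using cc unfolding Tr_def by auto
qed

lemma Tr_meet: "online c \<sigma> \<Longrightarrow> seg_set \<sigma> \<inter> seg_set \<tau> \<noteq> {} \<Longrightarrow> Tr c \<sigma> \<inter> Tr c \<tau> \<noteq> {}"
proof -
  assume o: "online c \<sigma>" and i: "seg_set \<sigma> \<inter> seg_set \<tau> \<noteq> {}"
  obtain m where m: "m \<in> seg_set \<sigma>" "m \<in> seg_set \<tau>" using i by blast
  have "snd m = c" using online_pt[OF o m(1)] .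
  then have "m = (fst m, c)" by (simp add: prod_eq_iff)
  then have "fst m \<in> Tr c \<sigma> \<inter> Tr c \<tau>" using m unfolding Tr_def by (metis IntI mem_Collect_eq)
  then show ?thesis by blast
qed

lemma Tr_disj: "seg_set \<sigma> \<inter> seg_set \<tau> = {} \<Longrightarrow> Tr c \<sigma> \<inter> Tr c \<tau> = {}"
  unfolding Tr_def by blast

locale M =
  fixes c1 c2 :: real and n :: nat and s :: "gvert \<Rightarrow> seg"
  assumes c12: "c1 \<noteq> c2" and n9: "9 \<le> n"
    and valid: "\<And>v. v \<in> Gn_verts n \<Longrightarrow> interval_seg c1 c2 (s v) \<or> perm_seg c1 c2 (s v)"
    and adj: "\<And>u v. u \<in> Gn_verts n \<Longrightarrow> v \<in> Gn_verts n \<Longrightarrow> u \<noteq> v \<Longrightarrow>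
       (Gn_adj n u v \<longleftrightarrow> seg_set (s u) \<inter> seg_set (s v) \<noteq> {})"
begin

abbreviation "P x \<equiv> perm_seg c1 c2 (s x)"

lemma grp_V: "i < n \<Longrightarrow> x \<in> grp i \<Longrightarrow> x \<in> Gn_verts n"
  unfolding grp_def by (auto simp: verts)

lemma disj: "u \<in> Gn_verts n \<Longrightarrow> v \<in> Gn_verts n \<Longrightarrow> u \<noteq> v \<Longrightarrow> \<not> Gn_adj n u v \<Longrightarrow>
   seg_set (s u) \<inter> seg_set (s v) = {}"
  using adj by blast

lemma inter: "u \<in> Gn_verts n \<Longrightarrow> v \<in> Gn_verts n \<Longrightarrow> u \<noteq> v \<Longrightarrow> Gn_adj n u v \<Longrightarrow>
   seg_set (s u) \<inter> seg_set (s v) \<noteq> {}"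
  using adj by blast

lemma farNA:
  assumes i: "i < n" and t: "2 \<le> t" "t \<le> n - 2" and x: "x \<in> grp i" and y: "y \<in> grp ((i+t) mod n)"
  shows "x \<noteq> y \<and> \<not> Gn_adj n x y"
proof -
  define k where "k = (i+t) mod n"
  have kk: "k = (if i+t < n then i+t else i+t-n)" unfolding k_def using i t n9 by (intro modsum) auto
  have kn: "k < n" using kk i t n9 by auto
  have ki: "k \<noteq> i" using kk i t n9 by auto
  have nv: "\<not> Gn_adj n (Vv i) (Vv k)" unfolding VV_iff[OF i kn] using kk i t n9
    by (auto split: if_splits)
  show ?thesis using x y nv ki unfolding grp_def k_def[symmetric] by (auto simp: adj_simps)
qed

lemma vv_next:
  assumes "a < n" shows "Gn_adj n (Vv a) (Vv ((a+1) mod n))" "a \<noteq> (a+1) mod n"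
  using assms n9 by (auto simp: adj_simps suc_mod)

lemma walkV:
  assumes i: "i < n" and x: "x \<in> grp i" and px: "P x"
  shows "2 \<le> t \<Longrightarrow> t \<le> n - 2 \<Longrightarrow>
     side c1 c2 (s x) (s (Vv ((i+t) mod n))) = side c1 c2 (s x) (s (Vv ((i+2) mod n)))"
proof (induction t rule: nat_induct_at_least)
  case base then show ?case by simp
next
  case (Suc t)
  let ?a = "(i+t) mod n"
  have an: "?a < n" using n9 by auto
  have eq: "(?a + 1) mod n = (i + Suc t) mod n" by (simp add: mod_simps)
  have xV: "x \<in> Gn_verts n" using grp_V[OF i x] .
  have f1: "x \<noteq> Vv ?a \<and> \<not> Gn_adj n x (Vv ?a)"
    using farNA[OF i, of t x "Vv ?a"] Suc x unfolding grp_def by auto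
  have f2: "x \<noteq> Vv ((i + Suc t) mod n) \<and> \<not> Gn_adj n x (Vv ((i + Suc t) mod n))"
    using farNA[OF i, of "Suc t" x "Vv ((i + Suc t) mod n)"] Suc x unfolding grp_def by auto
  have V1: "Vv ?a \<in> Gn_verts n" "Vv ((i + Suc t) mod n) \<in> Gn_verts n" using n9 by (auto simp: verts)
  have "side c1 c2 (s x) (s (Vv ?a)) = side c1 c2 (s x) (s (Vv ((i + Suc t) mod n)))"
  proof (rule side_edge[OF px c12 valid[OF V1(1)] valid[OF V1(2)]])
    show "seg_set (s x) \<inter> seg_set (s (Vv ?a)) = {}" using disj[OF xV V1(1)] f1 by blast
    show "seg_set (s x) \<inter> seg_set (s (Vv ((i + Suc t) mod n))) = {}" using disj[OF xV V1(2)] f2 by blast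
    show "seg_set (s (Vv ?a)) \<inter> seg_set (s (Vv ((i + Suc t) mod n))) \<noteq> {}"
      using inter[OF V1] vv_next[OF an] eq by auto
  qed
  then show ?case using Suc by simp
qed

definition sg :: "nat \<Rightarrow> gvert \<Rightarrow> bool" where
  "sg i x = side c1 c2 (s x) (s (Vv ((i+2) mod n)))"

lemma sideAll:
  assumes i: "i < n" and x: "x \<in> grp i" and px: "P x" and t: "2 \<le> t" "t \<le> n - 2"
    and y: "y \<in> grp ((i+t) mod n)"
  shows "side c1 c2 (s x) (s y) = sg i x"
proof -
  let ?k = "(i+t) mod n"
  have kn: "?k < n" using n9 by auto
  have xV: "x \<in> Gn_verts n" using grp_V[OF i x] .
  have V: "Vv ?k \<in> Gn_verts n" "Wv ?k \<in> Gn_verts n" "Zv ?k \<in> Gn_verts n" using kn by (auto simp: verts)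
  have dV: "seg_set (s x) \<inter> seg_set (s (Vv ?k)) = {}"
    using farNA[OF i t x, of "Vv ?k"] disj[OF xV V(1)] unfolding grp_def by auto
  have dW: "seg_set (s x) \<inter> seg_set (s (Wv ?k)) = {}"
    using farNA[OF i t x, of "Wv ?k"] disj[OF xV V(2)] unfolding grp_def by auto
  have dZ: "seg_set (s x) \<inter> seg_set (s (Zv ?k)) = {}"
    using farNA[OF i t x, of "Zv ?k"] disj[OF xV V(3)] unfolding grp_def by auto
  have sV: "side c1 c2 (s x) (s (Vv ?k)) = sg i x" unfolding sg_def using walkV[OF i x px t] .
  have iVW: "seg_set (s (Vv ?k)) \<inter> seg_set (s (Wv ?k)) \<noteq> {}"
    using inter[OF V(1) V(2)] kn by (auto simp: adj_simps)
  have iWZ: "seg_set (s (Wv ?k)) \<inter> seg_set (s (Zv ?k)) \<noteq> {}"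
    using inter[OF V(2) V(3)] kn by (auto simp: adj_simps)
  have sW: "side c1 c2 (s x) (s (Wv ?k)) = sg i x"
    using side_edge[OF px c12 valid[OF V(1)] valid[OF V(2)] dV dW iVW] sV by simp
  have sZ: "side c1 c2 (s x) (s (Zv ?k)) = sg i x"
    using side_edge[OF px c12 valid[OF V(2)] valid[OF V(3)] dW dZ iWZ] sW by simp
  show ?thesis using y sV sW sZ unfolding grp_def by auto
qed

lemma cluster:
  assumes i: "i < n" and x: "x \<in> grp i" and px: "P x" and t: "2 \<le> t" "t \<le> n - 2"
    and y: "y \<in> grp ((i+t) mod n)" and py: "P y"
  shows "sg i x \<noteq> sg ((i+t) mod n) y"
proof -
  let ?j = "(i+t) mod n"
  have jn: "?j < n" using n9 by auto
  have bk: "(?j + (n-t)) mod n = i"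
  proof -
    have "(?j + (n-t)) mod n = (i + t + (n-t)) mod n" by (metis mod_add_left_eq)
    also have "i + t + (n-t) = i + n" using t by simp
    finally show ?thesis using i by simp
  qed
  have t': "2 \<le> n - t" "n - t \<le> n - 2" using t n9 by auto
  have s1: "side c1 c2 (s x) (s y) = sg i x" using sideAll[OF i x px t y] .
  have s2: "side c1 c2 (s y) (s x) = sg ?j y" using sideAll[OF jn y py t', of x] bk x by simp
  have xV: "x \<in> Gn_verts n" using grp_V[OF i x] .
  have yV: "y \<in> Gn_verts n" using grp_V[OF jn y] .
  have d: "seg_set (s x) \<inter> seg_set (s y) = {}" using farNA[OF i t x y] disj[OF xV yV] by auto
  show ?thesis using side_antisym[OF px py c12 d] s1 s2 by auto
qed

definition D :: "nat set" where "D = {i. i < n \<and> (\<exists>x\<in>grp i. P x)}"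

lemma no3:
  assumes a: "a < n" and k: "k1 + 2 \<le> k2" "k2 + 2 \<le> k3" "k3 + 2 \<le> k1 + n"
    and d: "(a+k1) mod n \<in> D" "(a+k2) mod n \<in> D" "(a+k3) mod n \<in> D"
  shows False
proof -
  let ?i = "(a+k1) mod n"
  obtain x where x: "x \<in> grp ?i" "P x" using d(1) unfolding D_def by auto
  obtain y where y: "y \<in> grp ((a+k2) mod n)" "P y" using d(2) unfolding D_def by auto
  obtain z where z: "z \<in> grp ((a+k3) mod n)" "P z" using d(3) unfolding D_def by auto
  have i: "?i < n" using n9 by auto
  have j: "(a+k2) mod n < n" using n9 by auto
  have e12: "(?i + (k2-k1)) mod n = (a+k2) mod n"
  proof -
    have "a+k1+(k2-k1) = a+k2" using k by simp
    then show ?thesis by (metis mod_add_left_eq)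
  qed
  have e13: "(?i + (k3-k1)) mod n = (a+k3) mod n"
  proof -
    have "a+k1+(k3-k1) = a+k3" using k by simp
    then show ?thesis by (metis mod_add_left_eq)
  qed
  have e23: "((a+k2) mod n + (k3-k2)) mod n = (a+k3) mod n"
  proof -
    have "a+k2+(k3-k2) = a+k3" using k by simp
    then show ?thesis by (metis mod_add_left_eq)
  qed
  have 1: "sg ?i x \<noteq> sg ((a+k2) mod n) y"
    using cluster[OF i x(1) x(2), of "k2-k1" y] k y e12 by auto
  have 2: "sg ?i x \<noteq> sg ((a+k3) mod n) z"
    using cluster[OF i x(1) x(2), of "k3-k1" z] k z e13 by auto
  have 3: "sg ((a+k2) mod n) y \<noteq> sg ((a+k3) mod n) z"
    using cluster[OF j y(1) y(2), of "k3-k2" z] k z e23 by auto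
  show False using 1 2 3 by auto
qed

end


lemma adj_sym: "Gn_adj n x y = Gn_adj n y x"
  unfolding Gn_adj_def by (auto simp: insert_commute)

context M begin

lemma VVoff:
  assumes b0: "b0 < n" and km: "k < m" "m \<le> 4"
  shows "(Gn_adj n (Vv ((b0+k) mod n)) (Vv ((b0+m) mod n)) \<longleftrightarrow> m = k+1) \<and> (b0+k) mod n \<noteq> (b0+m) mod n"
proof -
  define p where "p = (b0+k) mod n"
  define q where "q = (b0+m) mod n"
  have A: "p = (if b0+k < n then b0+k else b0+k-n)" unfolding p_def using b0 km n9 by (intro modsum) auto
  have B: "q = (if b0+m < n then b0+m else b0+m-n)" unfolding q_def using b0 km n9 by (intro modsum) auto
  have An: "p < n" "q < n" unfolding p_def q_def using n9 by auto
  have V: "Gn_adj n (Vv p) (Vv q) \<longleftrightarrow> (q = p+1 \<or> p = q+1 \<or> (p+1 = n \<and> q = 0) \<or> (q+1 = n \<and> p = 0))"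
    using VV_iff[OF An] .
  show ?thesis unfolding p_def[symmetric] q_def[symmetric] V using A B b0 km n9 by (auto split: if_splits)
qed

lemma edgeTr: "online c (s u) \<Longrightarrow> u \<in> Gn_verts n \<Longrightarrow> v \<in> Gn_verts n \<Longrightarrow> u \<noteq> v \<Longrightarrow> Gn_adj n u v \<Longrightarrow>
   Tr c (s u) \<inter> Tr c (s v) \<noteq> {}"
  using Tr_meet inter by blast

lemma nonedgeTr: "u \<in> Gn_verts n \<Longrightarrow> v \<in> Gn_verts n \<Longrightarrow> u \<noteq> v \<Longrightarrow> \<not> Gn_adj n u v \<Longrightarrow>
   Tr c (s u) \<inter> Tr c (s v) = {}"
  using Tr_disj disj by blast

lemma dom: assumes b0: "b0 < n" shows "(b0+1) mod n \<in> D \<or> (b0+2) mod n \<in> D \<or> (b0+3) mod n \<in> D"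
proof (rule ccontr)
  assume nd: "\<not> ?thesis"
  define ix where "ix k = (b0+k) mod n" for k
  have ixn: "ix k < n" for k unfolding ix_def using n9 by auto
  have VV: "(Gn_adj n (Vv (ix k)) (Vv (ix m)) \<longleftrightarrow> m = k+1) \<and> ix k \<noteq> ix m" if "k < m" "m \<le> 4" for k m
    unfolding ix_def using VVoff[OF b0 that] .
  let ?A = "Vv (ix 0)" and ?B = "Vv (ix 1)" and ?C = "Vv (ix 2)" and ?D = "Vv (ix 3)"
    and ?E = "Vv (ix 4)" and ?W = "Wv (ix 2)" and ?Z = "Zv (ix 2)"
  have inV: "?A \<in> Gn_verts n" "?B \<in> Gn_verts n" "?C \<in> Gn_verts n" "?D \<in> Gn_verts n"
    "?E \<in> Gn_verts n" "?W \<in> Gn_verts n" "?Z \<in> Gn_verts n" using ixn by (auto simp: verts)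
  have nd': "ix 1 \<notin> D" "ix 2 \<notin> D" "ix 3 \<notin> D" using nd unfolding ix_def by auto
  have np: "\<not> P ?B" "\<not> P ?C" "\<not> P ?D" "\<not> P ?W" "\<not> P ?Z"
    using nd' ixn unfolding D_def grp_def by auto
  have iv: "interval_seg c1 c2 (s ?B)" "interval_seg c1 c2 (s ?C)" "interval_seg c1 c2 (s ?D)"
    "interval_seg c1 c2 (s ?W)" "interval_seg c1 c2 (s ?Z)"
    using np valid inV by blast+
  obtain c where oC: "online c (s ?C)" and cc: "c = c1 \<or> c = c2"
    using online_cases[OF iv(2)] by blast
  have aAB: "Gn_adj n ?B ?A" "?B \<noteq> ?A" using VV[of 0 1] by (auto simp: adj_sym)
  have aBC: "Gn_adj n ?C ?B" "?C \<noteq> ?B" using VV[of 1 2] by (auto simp: adj_sym)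
  have aCD: "Gn_adj n ?C ?D" "?C \<noteq> ?D" using VV[of 2 3] by auto
  have aDE: "Gn_adj n ?D ?E" "?D \<noteq> ?E" using VV[of 3 4] by auto
  have aCW: "Gn_adj n ?C ?W" "?C \<noteq> ?W" using ixn by (auto simp: adj_simps)
  have aWZ: "Gn_adj n ?W ?Z" "?W \<noteq> ?Z" using ixn by (auto simp: adj_simps)
  have oB: "online c (s ?B)" using online_prop[OF c12 oC iv(1)] inter[OF inV(3) inV(2) aBC(2) aBC(1)] by blast
  have oD: "online c (s ?D)" using online_prop[OF c12 oC iv(3)] inter[OF inV(3) inV(4) aCD(2) aCD(1)] by blast
  have oW: "online c (s ?W)" using online_prop[OF c12 oC iv(4)] inter[OF inV(3) inV(6) aCW(2) aCW(1)] by blast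
  have oZ: "online c (s ?Z)" using online_prop[OF c12 oW iv(5)] inter[OF inV(6) inV(7) aWZ(2) aWZ(1)] by blast
  have aDE': "Gn_adj n ?D ?E" using aDE by simp
  have oA: "P ?A \<or> online c (s ?A)"
    using online_prop[OF c12 oB, of "s ?A"] inter[OF inV(2) inV(1) aAB(2) aAB(1)] valid[OF inV(1)] by blast
  have oE: "P ?E \<or> online c (s ?E)"
    using online_prop[OF c12 oD, of "s ?E"] inter[OF inV(4) inV(5) aDE(2) aDE(1)] valid[OF inV(5)] by blast
  have neA: "Tr c (s ?A) \<noteq> {}" using oA perm_Tr[OF _ c12 cc] online_Tr by blast
  have neE: "Tr c (s ?E) \<noteq> {}" using oE perm_Tr[OF _ c12 cc] online_Tr by blast
  have neZ: "Tr c (s ?Z) \<noteq> {}" using online_Tr[OF oZ] .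
  have eAB: "Tr c (s ?A) \<inter> Tr c (s ?B) \<noteq> {}" using edgeTr[OF oB inV(2) inV(1) aAB(2) aAB(1)] by blast
  have eBC: "Tr c (s ?B) \<inter> Tr c (s ?C) \<noteq> {}" using edgeTr[OF oC inV(3) inV(2) aBC(2) aBC(1)] by blast
  have eCD: "Tr c (s ?C) \<inter> Tr c (s ?D) \<noteq> {}" using edgeTr[OF oC inV(3) inV(4) aCD(2) aCD(1)] by blast
  have eDE: "Tr c (s ?D) \<inter> Tr c (s ?E) \<noteq> {}" using edgeTr[OF oD inV(4) inV(5) aDE(2) aDE(1)] by blast
  have eCW: "Tr c (s ?C) \<inter> Tr c (s ?W) \<noteq> {}" using edgeTr[OF oC inV(3) inV(6) aCW(2) aCW(1)] by blast
  have eWZ: "Tr c (s ?W) \<inter> Tr c (s ?Z) \<noteq> {}" using edgeTr[OF oW inV(6) inV(7) aWZ(2) aWZ(1)] by blast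
  have dZA: "Tr c (s ?Z) \<inter> Tr c (s ?A) = {}" by (rule nonedgeTr[OF inV(7) inV(1)]) (auto simp: adj_simps)
  have dZB: "Tr c (s ?Z) \<inter> Tr c (s ?B) = {}" by (rule nonedgeTr[OF inV(7) inV(2)]) (auto simp: adj_simps)
  have dZC: "Tr c (s ?Z) \<inter> Tr c (s ?C) = {}" by (rule nonedgeTr[OF inV(7) inV(3)]) (auto simp: adj_simps)
  have dZD: "Tr c (s ?Z) \<inter> Tr c (s ?D) = {}" by (rule nonedgeTr[OF inV(7) inV(4)]) (auto simp: adj_simps)
  have dZE: "Tr c (s ?Z) \<inter> Tr c (s ?E) = {}" by (rule nonedgeTr[OF inV(7) inV(5)]) (auto simp: adj_simps)
  have dAC: "Tr c (s ?A) \<inter> Tr c (s ?C) = {}" by (rule nonedgeTr[OF inV(1) inV(3)]) (use VV[of 0 2] in auto)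
  have dAD: "Tr c (s ?A) \<inter> Tr c (s ?D) = {}" by (rule nonedgeTr[OF inV(1) inV(4)]) (use VV[of 0 3] in auto)
  have dAE: "Tr c (s ?A) \<inter> Tr c (s ?E) = {}" by (rule nonedgeTr[OF inV(1) inV(5)]) (use VV[of 0 4] in auto)
  have dAW: "Tr c (s ?A) \<inter> Tr c (s ?W) = {}" by (rule nonedgeTr[OF inV(1) inV(6)]) (use VV[of 0 2] in \<open>auto simp: adj_simps\<close>)
  have dEB: "Tr c (s ?E) \<inter> Tr c (s ?B) = {}" by (rule nonedgeTr[OF inV(5) inV(2)]) (use VV[of 1 4] in \<open>auto simp: adj_sym\<close>)
  have dEC: "Tr c (s ?E) \<inter> Tr c (s ?C) = {}" by (rule nonedgeTr[OF inV(5) inV(3)]) (use VV[of 2 4] in \<open>auto simp: adj_sym\<close>)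
  have dEW: "Tr c (s ?E) \<inter> Tr c (s ?W) = {}" by (rule nonedgeTr[OF inV(5) inV(6)]) (use VV[of 2 4] in \<open>auto simp: adj_simps\<close>)
  show False
    by (rule asteroid[OF ivl_Tr ivl_Tr ivl_Tr ivl_Tr ivl_Tr ivl_Tr ivl_Tr neA neE neZ
          eAB eBC eCD eDE eCW eWZ dZA dZB dZC dZD dZE dAC dAD dAE dAW dEB dEC dEW])
qed

lemma final: False
proof -
  obtain a where aD: "a \<in> D"
    using dom[of 0] n9 by auto
  have a: "a < n" using aD unfolding D_def by auto
  define Dk where "Dk k \<longleftrightarrow> (a+k) mod n \<in> D" for k
  have N: "False" if "k1+2 \<le> k2" "k2+2 \<le> k3" "k3+2 \<le> k1+n" "Dk k1" "Dk k2" "Dk k3" for k1 k2 k3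
    using no3[OF a that(1-3)] that(4-6) unfolding Dk_def by blast
  have d0: "Dk 0" using aD a unfolding Dk_def by simp
  have dm: "Dk (k+1) \<or> Dk (k+2) \<or> Dk (k+3)" for k
  proof -
    have h: "((a+k) mod n + r) mod n = (a + (k+r)) mod n" for r by (simp add: mod_add_left_eq add.assoc)
    have "(a+k) mod n < n" using n9 by simp
    from dom[OF this] show ?thesis unfolding h Dk_def .
  qed
  obtain kb where kb: "Dk kb" "2 \<le> kb" "kb \<le> 4" using dm[of 1] by fastforce
  have e: "n-5+1 = n-4" "n-5+2 = n-3" "n-5+3 = n-2" using n9 by auto
  obtain kc where kc: "Dk kc" "n-4 \<le> kc" "kc \<le> n-2" using dm[of "n-5"] unfolding e by fastforce
  show False
  proof (cases "kb + 2 \<le> kc")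
    case True show False apply (rule N[of 0 kb kc]) using True kb kc d0 n9 by auto
  next
    case False
    then have n: "n = 9" "kb = 4" "kc = 5" using kb kc n9 by auto
    obtain ke where ke: "Dk ke" "1 \<le> ke" "ke \<le> 3" using dm[of 0] by fastforce
    show False
    proof (cases "ke = 1")
      case False show False apply (rule N[of 0 ke 5]) using False ke kc n d0 by auto
    next
      case True
      obtain kf where kf: "Dk kf" "6 \<le> kf" "kf \<le> 8" using dm[of 5] by fastforce
      show False
      proof (cases "kf = 8")
        case False show False apply (rule N[of 0 4 kf]) using False kf kb n d0 by auto
      next
        case True show False apply (rule N[of 1 4 8]) using True kf kb ke n \<open>ke = 1\<close> by auto
      qed
    qed
  qed
qed

end

theorem mainTheorem10:
  fixes c1 c2 :: real and n :: nat
  assumes "c1 \<noteq> c2" and "n \<ge> 9"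
  shows "\<not> IP_SEG_graph c1 c2 (Gn_verts n) (Gn_adj n)"
proof
  assume "IP_SEG_graph c1 c2 (Gn_verts n) (Gn_adj n)"
  then obtain s where v: "\<forall>v\<in>Gn_verts n. interval_seg c1 c2 (s v) \<or> perm_seg c1 c2 (s v)"
    and e: "\<forall>u\<in>Gn_verts n. \<forall>v\<in>Gn_verts n. u \<noteq> v \<longrightarrow> (Gn_adj n u v \<longleftrightarrow> seg_set (s u) \<inter> seg_set (s v) \<noteq> {})"
    unfolding IP_SEG_graph_def by blast
  interpret M c1 c2 n s using assms v e by unfold_locales auto
  show False by (rule final)
qed

end
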